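(* Let $p,q\ge0$ be integers and $\alpha=(\alpha_1,\dots,\alpha_p)$, $\beta=(\beta_1,\dots,\beta_q)$ with all $\alpha_i>0,\beta_j>0$. Let ${}_p\rho_q(n)=n!\,\frac{(\beta_1)_n\cdots(\beta_q)_n}{(\alpha_1)_n\cdots(\alpha_p)_n}$, ${}_pF_q(\alpha,\beta;x)=\sum_{n\ge0}\frac{x^n}{{}_p\rho_q(n)}$, and for $w$ with $|w|^2$ strictly inside the disc of convergence let $|w;\alpha,\beta\rangle={}_pF_q(\alpha,\beta;|w|^2)^{-1/2}\sum_{n\ge0}\frac{w^n}{\sqrt{{}_p\rho_q(n)}}|n\rangle$ in the Hilbert space with orthonormal basis $\{|n\rangle\}_{n\ge0}$, where $\hat n|n\rangle=n|n\rangle$. Let $\Omega>0$, $\tau=2\pi/\Omega$, $k\ge1$ an integer, and $z$ with $|z|^2$ strictly inside the disc of convergence. Then $$e^{-i\Omega(\tau/k)\hat n^2}|z;\alpha,\beta\rangle=\frac1k\sum_{j=0}^{k-1}\sum_{l=0}^{k-1}e^{-2\pi i j(j+l)/k}\,|ze^{2\pi i l/k};\alpha,\beta\rangle .$$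
   Context: $(a)_n=a(a+1)\cdots(a+n-1)$, $(a)_0=1$, is the Pochhammer symbol. The series ${}_pF_q$ converges for all $x$ if $p\le q$ and for $|x|<1$ if $p=q+1$. The operator $e^{-i\Omega t\hat n^2}$ acts by $|n\rangle\mapsto e^{-i\Omega t n^2}|n\rangle$. *)

theory Defs
  imports "HOL-Analysis.Analysis"
begin

definition rho :: "real list \<Rightarrow> real list \<Rightarrow> nat \<Rightarrow> real" where
  "rho \<alpha> \<beta> n = fact n * (\<Prod>b\<leftarrow>\<beta>. pochhammer b n) / (\<Prod>a\<leftarrow>\<alpha>. pochhammer a n)"

definition hypF :: "real list \<Rightarrow> real list \<Rightarrow> real \<Rightarrow> real" where
  "hypF \<alpha> \<beta> x = (\<Sum>n. x ^ n / rho \<alpha> \<beta> n)"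

definition hypF_radius :: "real list \<Rightarrow> real list \<Rightarrow> ereal" where
  "hypF_radius \<alpha> \<beta> = conv_radius (\<lambda>n. 1 / rho \<alpha> \<beta> n)"

text \<open>States in the Hilbert space with orthonormal basis |n>, represented by their
  coefficient sequences n \<mapsto> <n|psi>.  The coherent state |w;alpha,beta>:\<close>
definition coh :: "real list \<Rightarrow> real list \<Rightarrow> complex \<Rightarrow> nat \<Rightarrow> complex" where
  "coh \<alpha> \<beta> w n = complex_of_real (hypF \<alpha> \<beta> ((cmod w)\<^sup>2) powr (-1/2))
      * w ^ n / complex_of_real (sqrt (rho \<alpha> \<beta> n))"

definition evol :: "real \<Rightarrow> real \<Rightarrow> (nat \<Rightarrow> complex) \<Rightarrow> nat \<Rightarrow> complex" where
  "evol \<Omega> t \<psi> n = exp (- \<i> * complex_of_real (\<Omega> * t * (real n)\<^sup>2)) * \<psi> n"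

end

theory Submission
  imports Defs
begin
lemma roots_sum:
  assumes k: "k \<ge> (1::nat)"
  shows "(\<Sum>l<k. exp (2*pi* \<i> * of_int m* of_nat l/of_nat k)) = (if int k dvd m then of_nat k else 0)"
proof -
  define w where "w = exp (2*pi* \<i> * of_int m/of_nat k)"
  have t: "exp (2*pi* \<i> * of_int m* of_nat l/of_nat k) = w ^ l" for l
    unfolding w_def by (subst exp_of_nat_mult[symmetric]) (simp add: algebra_simps)
  have wk: "w ^ k = 1"
  proof -
    have "w ^ k = exp (of_nat k * (2*pi* \<i> * of_int m/of_nat k))"
      unfolding w_def by (rule exp_of_nat_mult[symmetric])
    also have "\<dots> = exp (\<i> * (complex_of_int m * (complex_of_real pi * 2)))"
      using k by (simp add: field_simps)
    also have "\<dots> = 1" by (rule exp_2pi_1_int)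
    finally show ?thesis .
  qed
  have S: "(\<Sum>l<k. exp (2*pi* \<i> * of_int m* of_nat l/of_nat k)) = (\<Sum>l<k. w ^ l)"
    by (rule sum.cong) (simp_all only: t)
  show ?thesis
  proof (cases "int k dvd m")
    case True
    then obtain q where q: "m = int k * q" by blast
    have "w = exp (\<i> * (complex_of_int q * (complex_of_real pi * 2)))"
      unfolding w_def q using k by (simp add: field_simps)
    also have "\<dots> = 1" by (rule exp_2pi_1_int)
    finally have "w = 1" .
    then show ?thesis using True S by simp
  next
    case False
    have "w \<noteq> 1"
    proof
      assume "w = 1"
      then obtain n where n: "Im (2*pi* \<i> * of_int m/of_nat k) = real_of_int (2 * n) * pi"
        unfolding w_def exp_eq_1 by blast
      have "2*pi*real_of_int m/real k = real_of_int (2 * n) * pi" using n by simp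
      then have "real_of_int m = real k * real_of_int n" using k by (simp add: field_simps)
      then have "m = int k * n" by (metis of_int_eq_iff of_int_mult of_int_of_nat_eq)
      then show False using False by simp
    qed
    then show ?thesis using False S by (simp add: sum_gp_strict wk)
  qed
qed

lemma coh_rot:
  "coh \<alpha> \<beta> (z * exp (2 * pi * \<i> * of_nat l / of_nat k)) n
     = exp (2*pi* \<i> * of_int (int n) * of_nat l / of_nat k) * coh \<alpha> \<beta> z n"
proof -
  have nm: "cmod (z * exp (2 * pi * \<i> * of_nat l / of_nat k)) = cmod z"
    by (simp add: norm_mult norm_exp_eq_Re)
  have "exp (2 * pi * \<i> * of_nat l / of_nat k) ^ n = exp (of_nat n * (2 * pi * \<i> * of_nat l / of_nat k))"
    by (rule exp_of_nat_mult[symmetric])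
  also have "\<dots> = exp (2*pi* \<i> * of_int (int n) * of_nat l / of_nat k)"
    by (simp add: algebra_simps)
  finally have e: "exp (2 * pi * \<i> * of_nat l / of_nat k) ^ n = exp (2*pi* \<i> * of_int (int n) * of_nat l / of_nat k)" .
  show ?thesis unfolding coh_def nm power_mult_distrib e by (simp add: algebra_simps)
qed

lemma dvd_iff_mod:
  assumes "j < (k::nat)"
  shows "int k dvd (int n - int j) \<longleftrightarrow> j = n mod k"
proof -
  have "int k dvd (int n - int j) \<longleftrightarrow> int n mod int k = int j mod int k"
    by (simp add: mod_eq_dvd_iff)
  also have "\<dots> \<longleftrightarrow> n mod k = j mod k"
    by (metis of_nat_eq_iff zmod_int)
  also have "\<dots> \<longleftrightarrow> j = n mod k" using assms by auto
  finally show ?thesis .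
qed

lemma phase_mod:
  assumes "k \<ge> (1::nat)"
  shows "exp (- 2*pi* \<i> * of_nat (n^2) / of_nat k) = exp (- 2*pi* \<i> * of_nat ((n mod k)^2) / of_nat k)"
proof -
  define r q where "r = n mod k" and "q = n div k"
  have nn: "n = q*k + r" unfolding r_def q_def by simp
  define t where "t = q*q*k + 2*q*r"
  have sq: "n^2 = r^2 + k * t" unfolding nn t_def by (simp add: power2_eq_square algebra_simps)
  have "exp (- 2*pi* \<i> * of_nat (n^2) / of_nat k) = exp (- 2*pi* \<i> * of_nat (r^2) / of_nat k) * exp (- (\<i> * (of_nat t * (of_real pi * 2))))"
    unfolding sq exp_add[symmetric] using assms by (simp add: field_simps)
  also have "exp (- (\<i> * (of_nat t * (of_real pi * 2)))) = 1"
    unfolding exp_minus exp_2pi_1_nat by simp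
  finally show ?thesis unfolding r_def by simp
qed


theorem mainTheorem4:
  fixes \<alpha> \<beta> :: "real list" and \<Omega> :: real and k :: nat and z :: complex
  assumes "\<forall>a\<in>set \<alpha>. a > 0" and "\<forall>b\<in>set \<beta>. b > 0"
    and "\<Omega> > 0" and "k \<ge> 1"
    and "ereal ((cmod z)\<^sup>2) < hypF_radius \<alpha> \<beta>"
  shows "evol \<Omega> ((2 * pi / \<Omega>) / real k) (coh \<alpha> \<beta> z) =
    (\<lambda>n. (1 / of_nat k) * (\<Sum>j<k. \<Sum>l<k.
        exp (- 2 * pi * \<i> * of_nat (j * (j + l)) / of_nat k)
        * coh \<alpha> \<beta> (z * exp (2 * pi * \<i> * of_nat l / of_nat k)) n))"
proof
  fix n
  define c where "c = coh \<alpha> \<beta> z n"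
  have k: "k \<ge> 1" by fact
  have kz: "(of_nat k :: complex) \<noteq> 0" using k by simp
  have trm: "exp (- 2 * pi * \<i> * of_nat (j * (j + l)) / of_nat k)
        * coh \<alpha> \<beta> (z * exp (2 * pi * \<i> * of_nat l / of_nat k)) n
      = exp (- 2*pi* \<i> * of_nat (j^2) / of_nat k) * 
        exp (2*pi* \<i> * of_int (int n - int j) * of_nat l / of_nat k) * c" for j l
  proof -
    have "exp (- 2 * pi * \<i> * of_nat (j * (j + l)) / of_nat k) *
          exp (2*pi* \<i> * of_int (int n) * of_nat l / of_nat k)
        = exp (- 2*pi* \<i> * of_nat (j^2) / of_nat k) * 
          exp (2*pi* \<i> * of_int (int n - int j) * of_nat l / of_nat k)"
      unfolding exp_add[symmetric]
    proof (rule arg_cong[where f=exp])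
      show "- 2 * pi * \<i> * of_nat (j * (j + l)) / of_nat k +
          2*pi* \<i> * of_int (int n) * of_nat l / of_nat k
        = - 2*pi* \<i> * of_nat (j^2) / of_nat k + 
          2*pi* \<i> * of_int (int n - int j) * of_nat l / of_nat k"
        using kz by (simp add: divide_simps power2_eq_square) (simp add: algebra_simps)
    qed
    then show ?thesis unfolding coh_rot c_def by (simp add: mult.assoc)
  qed
  have "(1 / of_nat k) * (\<Sum>j<k. \<Sum>l<k.
        exp (- 2 * pi * \<i> * of_nat (j * (j + l)) / of_nat k)
        * coh \<alpha> \<beta> (z * exp (2 * pi * \<i> * of_nat l / of_nat k)) n)
     = (1 / of_nat k) * (\<Sum>j<k. exp (- 2*pi* \<i> * of_nat (j^2) / of_nat k) * c *
         (\<Sum>l<k. exp (2*pi* \<i> * of_int (int n - int j) * of_nat l / of_nat k)))"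
    unfolding trm by (simp add: sum_distrib_left mult_ac)
  also have "\<dots> = (1 / of_nat k) * (\<Sum>j<k. exp (- 2*pi* \<i> * of_nat (j^2) / of_nat k) * c *
         (if j = n mod k then of_nat k else 0))"
    unfolding roots_sum[OF k]
    by (intro arg_cong[where f="\<lambda>x. _ * x"] sum.cong refl) (simp add: dvd_iff_mod)
  also have "\<dots> = exp (- 2*pi* \<i> * of_nat ((n mod k)^2) / of_nat k) * c"
    using k by (simp add: sum.delta' if_distrib[of "\<lambda>x. _ * x"] cong: if_cong)
  also have "\<dots> = exp (- 2*pi* \<i> * of_nat (n^2) / of_nat k) * c"
    using phase_mod[OF k] by simp
  also have "\<dots> = evol \<Omega> ((2 * pi / \<Omega>) / real k) (coh \<alpha> \<beta> z) n"
    unfolding evol_def c_def using \<open>\<Omega> > 0\<close> by (simp add: field_simps)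
  finally show "evol \<Omega> ((2 * pi / \<Omega>) / real k) (coh \<alpha> \<beta> z) n =
    (\<lambda>n. (1 / of_nat k) * (\<Sum>j<k. \<Sum>l<k.
        exp (- 2 * pi * \<i> * of_nat (j * (j + l)) / of_nat k)
        * coh \<alpha> \<beta> (z * exp (2 * pi * \<i> * of_nat l / of_nat k)) n)) n" by simp
qed

end
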